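(* Let $\mu>0$, $\delta>0$, let $\gamma$ be a density matrix on $\mathbb{C}^\Lambda$ ($0\le\gamma\le1$) with density $\rho(x)=\gamma_{x,x}$, and let $\Omega=\{x\in\Lambda:\rho(x)<\delta\}$, $\Omega^c=\Lambda\setminus\Omega$. Then $$\mathrm{Tr}\{K_\mu\gamma\}\ \ge\ \mathrm{Tr}\{[P_\Omega^\perp K_\mu P_\Omega^\perp]_-\}-4d\,\delta^{1/2}\,|\partial\Omega|-\mu\sum_{x\in\Omega}\rho(x).$$
   Context: $\Lambda=\mathbb{Z}_L^d$ periodic lattice; $T_{x,y}=1$ if $|x-y|_1=1$, else $0$; $\Delta_{x,y}=T_{x,y}-2d\delta_{x,y}$; $K_\mu=-\Delta-\mu$; $[X]_-=\min\{X,0\}$ (so $\mathrm{Tr}[X]_-$ is the sum of negative eigenvalues). For $A\subseteq\Lambda$, $P_A$ is the orthogonal projection on $\mathbb{C}^\Lambda$ given by $(P_Af)(x)=f(x)$ for $x\in A$ and $0$ otherwise; $P_\Omega^\perp=1-P_\Omega=P_{\Omega^c}$. The boundary is $\partial\Omega=\{x\in\Omega:\mathrm{dist}_1(x,\Omega^c)=1\}$, where $\mathrm{dist}_1$ is the graph ($\ell^1$) distance on $\Lambda$; $|\partial\Omega|$ is its cardinality. *)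

theory Defs
  imports "Jordan_Normal_Form.Schur_Decomposition" "HOL-Computational_Algebra.Polynomial"
begin

text \<open>The periodic lattice Lambda = (Z_L)^d is encoded by the index set {0..<L^d}:
  a site k has coordinates (k div L^i) mod L for i < d (base-L digits).\<close>

definition n_sites :: "nat \<Rightarrow> nat \<Rightarrow> nat" where
  "n_sites d L = L ^ d"

definition site_coord :: "nat \<Rightarrow> nat \<Rightarrow> nat \<Rightarrow> nat" where
  "site_coord L i k = (k div L ^ i) mod L"

definition lat_dist :: "nat \<Rightarrow> nat \<Rightarrow> nat \<Rightarrow> nat \<Rightarrow> nat" where
  "lat_dist d L x y =
     (\<Sum>i<d. let a = site_coord L i x; b = site_coord L i y;
                 t = (if a \<le> b then b - a else a - b)
             in min t (L - t))"

definition hopT :: "nat \<Rightarrow> nat \<Rightarrow> complex mat" where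
  "hopT d L = mat (n_sites d L) (n_sites d L)
      (\<lambda>(x, y). if lat_dist d L x y = 1 then 1 else 0)"

definition lapl :: "nat \<Rightarrow> nat \<Rightarrow> complex mat" where
  "lapl d L = hopT d L - (of_nat (2 * d)) \<cdot>\<^sub>m 1\<^sub>m (n_sites d L)"

definition Kmu :: "nat \<Rightarrow> nat \<Rightarrow> real \<Rightarrow> complex mat" where
  "Kmu d L \<mu> = - lapl d L - (complex_of_real \<mu>) \<cdot>\<^sub>m 1\<^sub>m (n_sites d L)"

definition projP :: "nat \<Rightarrow> nat \<Rightarrow> nat set \<Rightarrow> complex mat" where
  "projP d L A = mat (n_sites d L) (n_sites d L)
      (\<lambda>(x, y). if x = y \<and> x \<in> A then 1 else 0)"

text \<open>Tr [X]_- : sum of the negative eigenvalues (with algebraic multiplicity),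
  eigenvalues being the roots of the characteristic polynomial.\<close>
definition mat_trace :: "complex mat \<Rightarrow> complex" where
  "mat_trace A = (\<Sum>i<dim_row A. A $$ (i, i))"

definition neg_trace :: "complex mat \<Rightarrow> real" where
  "neg_trace X = sum_mset (image_mset (\<lambda>z. min (Re z) 0) (proots (char_poly X)))"

definition density_matrix :: "nat \<Rightarrow> complex mat \<Rightarrow> bool" where
  "density_matrix n g \<longleftrightarrow> g \<in> carrier_mat n n \<and> mat_adjoint g = g \<and>
     (\<forall>v :: nat \<Rightarrow> complex.
        0 \<le> Re (\<Sum>i<n. \<Sum>j<n. cnj (v i) * g $$ (i, j) * v j) \<and>
        Re (\<Sum>i<n. \<Sum>j<n. cnj (v i) * g $$ (i, j) * v j) \<le> (\<Sum>i<n. (cmod (v i))\<^sup>2))"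

definition lat_boundary :: "nat \<Rightarrow> nat \<Rightarrow> nat set \<Rightarrow> nat set" where
  "lat_boundary d L \<Omega> = {x \<in> \<Omega>. \<exists>y \<in> {..<n_sites d L} - \<Omega>. lat_dist d L x y = 1}"

end

theory Submission
  imports Defs
begin



lemma mult_index_sum: "(A::'a::comm_semiring_0 mat) \<in> carrier_mat n m \<Longrightarrow> B \<in> carrier_mat m k \<Longrightarrow> i < n \<Longrightarrow> j < k \<Longrightarrow>
  (A * B) $$ (i,j) = (\<Sum>l<m. A $$ (i,l) * B $$ (l,j))"
  by (simp add: scalar_prod_def atLeast0LessThan)

lemma adj_dim[simp]: "dim_row (mat_adjoint A) = dim_col A" "dim_col (mat_adjoint A) = dim_row A"
  by (simp_all add: mat_adjoint_def mat_of_rows_def)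

lemma adj_index[simp]: "i < dim_col A \<Longrightarrow> j < dim_row A \<Longrightarrow> mat_adjoint (A::complex mat) $$ (i,j) = cnj (A $$ (j,i))"
  by (simp add: mat_adjoint_def mat_of_rows_def)

lemma adj_carrier: "A \<in> carrier_mat n m \<Longrightarrow> mat_adjoint A \<in> carrier_mat m n"
  by (rule carrier_matI) (simp_all add: carrier_matD)

lemma adj_mult: assumes A: "(A::complex mat) \<in> carrier_mat n m" and B: "B \<in> carrier_mat m k"
  shows "mat_adjoint (A * B) = mat_adjoint B * mat_adjoint A"
proof (rule eq_matI)
  fix i j assume i: "i < dim_row (mat_adjoint B * mat_adjoint A)" and j: "j < dim_col (mat_adjoint B * mat_adjoint A)"
  have i': "i < k" and j': "j < n" using i j assms by simp_all
  have "mat_adjoint (A * B) $$ (i, j) = cnj ((A*B) $$ (j,i))" by (rule adj_index) (insert i' j' A B, simp_all)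
  also have "\<dots> = cnj (\<Sum>l<m. A $$ (j,l) * B $$ (l,i))" unfolding mult_index_sum[OF A B j' i'] ..
  also have "\<dots> = (\<Sum>l<m. mat_adjoint B $$ (i,l) * mat_adjoint A $$ (l,j))"
    unfolding cnj_sum using i' j' A B by (intro sum.cong refl) simp
  also have "\<dots> = (mat_adjoint B * mat_adjoint A) $$ (i, j)"
    by (rule mult_index_sum[OF adj_carrier[OF B] adj_carrier[OF A] i' j', symmetric])
  finally show "mat_adjoint (A * B) $$ (i, j) = (mat_adjoint B * mat_adjoint A) $$ (i, j)" .
next
  show "dim_row (mat_adjoint (A * B)) = dim_row (mat_adjoint B * mat_adjoint A)" using A B by simp
next
  show "dim_col (mat_adjoint (A * B)) = dim_col (mat_adjoint B * mat_adjoint A)" using A B by simp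
qed

lemma adj_adj[simp]: "mat_adjoint (mat_adjoint (A::complex mat)) = A"
  by (rule eq_matI, auto)

lemma adj_one[simp]: "mat_adjoint (1\<^sub>m n :: complex mat) = 1\<^sub>m n"
  by (rule eq_matI, auto)

lemma adj_zero[simp]: "mat_adjoint (0\<^sub>m n m :: complex mat) = 0\<^sub>m m n"
  by (rule eq_matI, auto)

lemma adj_four_block: assumes "(A::complex mat) \<in> carrier_mat n1 m1" "B \<in> carrier_mat n1 m2"
   "C \<in> carrier_mat n2 m1" "D \<in> carrier_mat n2 m2"
  shows "mat_adjoint (four_block_mat A B C D) = four_block_mat (mat_adjoint A) (mat_adjoint C) (mat_adjoint B) (mat_adjoint D)"
  by (rule eq_matI, insert assms, auto)




lemma unitary_schur:
  fixes A :: "complex mat"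
  assumes "A \<in> carrier_mat n n"
  shows "\<exists>U B. U \<in> carrier_mat n n \<and> B \<in> carrier_mat n n \<and> mat_adjoint U * U = 1\<^sub>m n \<and>
     U * mat_adjoint U = 1\<^sub>m n \<and> upper_triangular B \<and> A = U * B * mat_adjoint U"
  using assms
proof (induction n arbitrary: A)
  case 0
  have "A = 1\<^sub>m 0 * A * mat_adjoint (1\<^sub>m 0)"
    by (rule eq_matI) (use 0 in simp_all)
  moreover have "upper_triangular A" using 0 unfolding upper_triangular_def by simp
  ultimately show ?case using 0 by (intro exI[of _ "1\<^sub>m 0"] exI[of _ A]) simp
next
  case (Suc m)
  define n where "n = Suc m"
  have A: "A \<in> carrier_mat n n" using Suc.prems n_def by simp
  obtain as where cp: "char_poly A = (\<Prod>a\<leftarrow>as. [:- a, 1:])" and las: "length as = n"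
    using char_poly_factorized[OF A] by blast
  then obtain e as' where as: "as = e # as'" unfolding n_def by (cases as) auto
  have "poly (char_poly A) e = 0" unfolding cp as by simp
  hence ev: "eigenvalue A e" using eigenvalue_root_char_poly[OF A] by simp
  define v where "v = find_eigenvector A e"
  have "eigenvector A v e" using find_eigenvector[OF A ev] v_def by simp
  hence v: "v \<in> carrier_vec n" and v0: "v \<noteq> 0\<^sub>v n" and Av: "A *\<^sub>v v = e \<cdot>\<^sub>v v"
    using A unfolding eigenvector_def by auto
  interpret cof_vec_space n "TYPE(complex)" .
  define b where "b = basis_completion v"
  from basis_completion[OF v v0, folded b_def]
  have indep: "\<not> lin_dep (set b)" and bc: "set b \<subseteq> carrier_vec n" and dist_b: "distinct b"
    and hdb: "hd b = v" and len_b: "length b = n" by auto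
  from hdb len_b obtain vs where bv: "b = v # vs" unfolding n_def by (cases b) auto
  define ws where "ws = gram_schmidt n b"
  from gram_schmidt_result[OF bc dist_b indep ws_def]
  have wsc: "set ws \<subseteq> carrier_vec n" and orth: "corthogonal ws" and lws: "length ws = n"
    using len_b by auto
  have hdws: "hd ws = v" unfolding ws_def bv using gram_schmidt_hd[OF v] by simp
  have ws0: "ws ! 0 = v" using hdws lws unfolding n_def by (cases ws) auto
  have wsi: "ws ! i \<in> carrier_vec n" if "i < n" for i using wsc lws that by auto
  define r where "r i = Re (ws!i \<bullet>c ws!i)" for i
  have rpos: "r i > 0" and req: "ws!i \<bullet>c ws!i = complex_of_real (r i)" if "i < n" for i
  proof -
    have ge: "ws!i \<bullet>c ws!i \<ge> 0" by (rule conjugate_square_ge_0_vec)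
    have ne: "ws!i \<bullet>c ws!i \<noteq> 0" using corthogonalD[OF orth, of i i] that lws by auto
    from ge ne show "r i > 0" "ws!i \<bullet>c ws!i = complex_of_real (r i)" 
      unfolding r_def by (auto simp: less_eq_complex_def complex_eq_iff)
  qed
  define c where "c i = complex_of_real (1 / sqrt (r i))" for i
  have cc: "cnj (c i) * c i * complex_of_real (r i) = 1" if "i < n" for i
  proof -
    have "cnj (c i) * c i * complex_of_real (r i) = complex_of_real ((1 / sqrt (r i)) * (1 / sqrt (r i)) * r i)"
      unfolding c_def by (simp only: complex_cnj_complex_of_real of_real_mult)
    also have "(1 / sqrt (r i)) * (1 / sqrt (r i)) * r i = 1" using rpos[OF that]
      by (simp add: field_simps)
    finally show ?thesis by simp
  qed
  define W where "W = mat n n (\<lambda>(k,i). c i * (ws!i $ k))"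
  have W: "W \<in> carrier_mat n n" unfolding W_def by simp
  have adjW: "mat_adjoint W \<in> carrier_mat n n" using adj_carrier[OF W] .
  have WW: "mat_adjoint W * W = 1\<^sub>m n"
  proof (rule eq_matI)
    fix i j assume i: "i < dim_row (1\<^sub>m n :: complex mat)" and j: "j < dim_col (1\<^sub>m n :: complex mat)"
    hence i: "i < n" and j: "j < n" by simp_all
    have "(mat_adjoint W * W) $$ (i,j) = (\<Sum>k<n. mat_adjoint W $$ (i,k) * W $$ (k,j))"
      by (rule mult_index_sum[OF adjW W i j])
    also have "\<dots> = (\<Sum>k<n. cnj (c i) * c j * (ws!j $ k * cnj (ws!i $ k)))"
      by (rule sum.cong) (use i j W in \<open>simp_all add: W_def\<close>)
    also have "\<dots> = cnj (c i) * c j * (ws!j \<bullet>c ws!i)"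
      using carrier_vecD[OF wsi[OF i]] carrier_vecD[OF wsi[OF j]]
      by (simp add: sum_distrib_left scalar_prod_def atLeast0LessThan)
    also have "\<dots> = 1\<^sub>m n $$ (i,j)"
    proof (cases "i = j")
      case True thus ?thesis using cc[OF i] req[OF i] i by simp
    next
      case False
      hence "ws!j \<bullet>c ws!i = 0" using corthogonalD[OF orth, of j i] lws i j by auto
      thus ?thesis using False i j by simp
    qed
    finally show "(mat_adjoint W * W) $$ (i,j) = 1\<^sub>m n $$ (i,j)" .
  qed (use W in simp_all)
  have WW': "W * mat_adjoint W = 1\<^sub>m n" by (rule mat_mult_left_right_inverse[OF adjW W WW])
  have W0: "W $$ (k,0) = c 0 * v $ k" if "k < n" for k
    using that ws0 unfolding W_def n_def by simp
  have AW0: "(A * W) $$ (k,0) = e * W $$ (k,0)" if k: "k < n" for k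
  proof -
    have n0: "0 < n" unfolding n_def by simp
    have "(A * W) $$ (k,0) = (\<Sum>l<n. A $$ (k,l) * W $$ (l,0))" by (rule mult_index_sum[OF A W k n0])
    also have "\<dots> = c 0 * (\<Sum>l<n. A $$ (k,l) * v $ l)"
      unfolding sum_distrib_left by (rule sum.cong) (simp_all add: W0)
    also have "(\<Sum>l<n. A $$ (k,l) * v $ l) = (A *\<^sub>v v) $ k"
      using A v k by (simp add: scalar_prod_def atLeast0LessThan)
    also have "\<dots> = e * v $ k" using Av v k by simp
    finally show ?thesis using W0[OF k] by simp
  qed
  define A' where "A' = mat_adjoint W * A * W"
  have A': "A' \<in> carrier_mat n n" unfolding A'_def using adjW A W by simp
  have A'0: "A' $$ (i,0) = (if i = 0 then e else 0)" if i: "i < n" for i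
  proof -
    have n0: "0 < n" unfolding n_def by simp
    have "A' = mat_adjoint W * (A * W)" unfolding A'_def by (rule assoc_mult_mat[OF adjW A W])
    hence "A' $$ (i,0) = (\<Sum>k<n. mat_adjoint W $$ (i,k) * (A * W) $$ (k,0))"
      using mult_index_sum[OF adjW mult_carrier_mat[OF A W] i n0] by simp
    also have "\<dots> = e * (\<Sum>k<n. mat_adjoint W $$ (i,k) * W $$ (k,0))"
      unfolding sum_distrib_left by (rule sum.cong) (simp_all add: AW0)
    also have "(\<Sum>k<n. mat_adjoint W $$ (i,k) * W $$ (k,0)) = (mat_adjoint W * W) $$ (i,0)"
      by (rule mult_index_sum[OF adjW W i n0, symmetric])
    also have "\<dots> = (if i = 0 then 1 else 0)" unfolding WW using i n0 by simp
    finally show ?thesis by simp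
  qed
  define E where "E = (mat 1 1 (\<lambda>_. e) :: complex mat)"
  define A2 where "A2 = mat 1 m (\<lambda>(i,j). A' $$ (0, Suc j))"
  define A3 where "A3 = mat m m (\<lambda>(i,j). A' $$ (Suc i, Suc j))"
  have E: "E \<in> carrier_mat 1 1" and A2: "A2 \<in> carrier_mat 1 m" and A3: "A3 \<in> carrier_mat m m"
    unfolding E_def A2_def A3_def by simp_all
  have A'blk: "A' = four_block_mat E A2 (0\<^sub>m m 1) A3"
  proof (rule eq_matI)
    fix i j assume i: "i < dim_row (four_block_mat E A2 (0\<^sub>m m 1) A3)" and j: "j < dim_col (four_block_mat E A2 (0\<^sub>m m 1) A3)"
    hence i: "i < Suc m" and j: "j < Suc m" using E A3 by simp_all
    show "A' $$ (i,j) = four_block_mat E A2 (0\<^sub>m m 1) A3 $$ (i,j)"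
    proof (cases "j = 0")
      case True thus ?thesis using A'0[of i] i E A3 unfolding n_def by (simp add: E_def)
    next
      case False
      then obtain j' where j': "j = Suc j'" by (cases j) auto
      show ?thesis
      proof (cases "i = 0")
        case True thus ?thesis using j j' E A2 A3 by (simp add: A2_def)
      next
        case False
        then obtain i' where i': "i = Suc i'" by (cases i) auto
        thus ?thesis using i j j' E A2 A3 by (simp add: A3_def)
      qed
    qed
  qed (use A' E A3 in \<open>simp_all add: n_def\<close>)
  obtain U3 B3 where U3: "U3 \<in> carrier_mat m m" and B3: "B3 \<in> carrier_mat m m"
    and U3U: "mat_adjoint U3 * U3 = 1\<^sub>m m" and UU3: "U3 * mat_adjoint U3 = 1\<^sub>m m"
    and ut3: "upper_triangular B3" and A3eq: "A3 = U3 * B3 * mat_adjoint U3"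
    using Suc.IH[OF A3] by blast
  have assoc: "X * Y * Z = X * (Y * Z)" if "X \<in> carrier_mat n n" "Y \<in> carrier_mat n n" "Z \<in> carrier_mat n n"
    for X Y Z :: "complex mat" using that by simp
  have mc: "X * Y \<in> carrier_mat n n" if "X \<in> carrier_mat n n" "Y \<in> carrier_mat n n"
    for X Y :: "complex mat" using that by simp
  have WWX: "mat_adjoint W * (W * X) = X" if "X \<in> carrier_mat n n" for X
    using that assoc[OF adjW W that, symmetric] WW by simp
  have WWX': "W * (mat_adjoint W * X) = X" if "X \<in> carrier_mat n n" for X
    using that assoc[OF W adjW that, symmetric] WW' by simp
  define Ub where "Ub = four_block_mat (1\<^sub>m 1) (0\<^sub>m 1 m) (0\<^sub>m m 1) U3"
  have "Ub \<in> carrier_mat (1+m) (1+m)" unfolding Ub_def by (rule four_block_carrier_mat[OF one_carrier_mat U3])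
  hence Ub: "Ub \<in> carrier_mat n n" unfolding n_def by simp
  have adjUb: "mat_adjoint Ub = four_block_mat (1\<^sub>m 1) (0\<^sub>m 1 m) (0\<^sub>m m 1) (mat_adjoint U3)"
    unfolding Ub_def by (subst adj_four_block[OF one_carrier_mat zero_carrier_mat zero_carrier_mat U3]) simp
  have adjUbc: "mat_adjoint Ub \<in> carrier_mat n n" using adj_carrier[OF Ub] .
  have adjU3: "mat_adjoint U3 \<in> carrier_mat m m" using adj_carrier[OF U3] .
  have UbUb: "mat_adjoint Ub * Ub = 1\<^sub>m n"
    unfolding adjUb unfolding Ub_def
    by (subst mult_four_block_mat[OF one_carrier_mat zero_carrier_mat zero_carrier_mat adjU3 one_carrier_mat zero_carrier_mat zero_carrier_mat U3])
      (use U3 adjU3 U3U in \<open>simp add: n_def\<close>)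
  define B where "B = four_block_mat E (A2 * U3) (0\<^sub>m m 1) B3"
  have "B \<in> carrier_mat (1+m) (1+m)" unfolding B_def by (rule four_block_carrier_mat[OF E B3])
  hence B: "B \<in> carrier_mat n n" unfolding n_def by simp
  have utB: "upper_triangular B" unfolding B_def
    by (rule upper_triangular_four_block[OF E B3 _ ut3]) (simp add: E_def upper_triangular_def)
  have A2U3: "A2 * U3 \<in> carrier_mat 1 m" using A2 U3 by simp
  have UbB: "Ub * B = four_block_mat E (A2 * U3) (0\<^sub>m m 1) (U3 * B3)"
    unfolding Ub_def B_def
    by (subst mult_four_block_mat[OF one_carrier_mat zero_carrier_mat zero_carrier_mat U3 E A2U3 zero_carrier_mat B3])
      (use U3 E A2U3 B3 carrier_matD[OF A2U3] carrier_matD[OF U3] carrier_matD[OF B3] carrier_matD[OF E] in simp)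
  have U3B3: "U3 * B3 \<in> carrier_mat m m" using U3 B3 by simp
  have UbBUb: "Ub * B * mat_adjoint Ub = A'"
    unfolding UbB adjUb
    apply (subst mult_four_block_mat[OF E A2U3 zero_carrier_mat U3B3 one_carrier_mat zero_carrier_mat zero_carrier_mat adjU3])
    apply (subst assoc_mult_mat[OF A2 U3 adjU3])
    using E A2 U3 B3 A2U3 U3B3 adjU3 UU3 carrier_matD[OF A2U3] carrier_matD[OF U3B3] carrier_matD[OF E]
      carrier_matD[OF A2] carrier_matD[OF adjU3] unfolding A'blk A3eq by simp
  define U where "U = W * Ub"
  have U: "U \<in> carrier_mat n n" unfolding U_def using W Ub by simp
  have adjU: "mat_adjoint U = mat_adjoint Ub * mat_adjoint W" unfolding U_def by (rule adj_mult[OF W Ub])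
  have UU: "mat_adjoint U * U = 1\<^sub>m n"
    unfolding adjU unfolding U_def
    by (simp add: assoc_mult_mat[OF adjUbc adjW mult_carrier_mat[OF W Ub]] WWX[OF Ub] UbUb)
  have UU': "U * mat_adjoint U = 1\<^sub>m n"
    by (rule mat_mult_left_right_inverse[OF adj_carrier[OF U] U UU])
  have UbBc: "Ub * B \<in> carrier_mat n n" using Ub B by simp
  have AWc: "A * W \<in> carrier_mat n n" using A W by simp
  have "U * B * mat_adjoint U = (W * Ub) * B * (mat_adjoint Ub * mat_adjoint W)"
    unfolding adjU unfolding U_def ..
  also have "\<dots> = W * (Ub * B) * (mat_adjoint Ub * mat_adjoint W)"
    by (simp only: assoc_mult_mat[OF W Ub B])
  also have "\<dots> = W * ((Ub * B) * (mat_adjoint Ub * mat_adjoint W))"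
    by (rule assoc_mult_mat[OF W UbBc mult_carrier_mat[OF adjUbc adjW]])
  also have "(Ub * B) * (mat_adjoint Ub * mat_adjoint W) = A' * mat_adjoint W"
    by (simp only: assoc_mult_mat[OF UbBc adjUbc adjW, symmetric] UbBUb)
  also have "A' = mat_adjoint W * (A * W)" unfolding A'_def by (rule assoc_mult_mat[OF adjW A W])
  also have "W * (mat_adjoint W * (A * W) * mat_adjoint W) = (W * (mat_adjoint W * (A * W))) * mat_adjoint W"
    by (rule assoc_mult_mat[OF W mult_carrier_mat[OF adjW AWc] adjW, symmetric])
  also have "W * (mat_adjoint W * (A * W)) = A * W" by (rule WWX'[OF AWc])
  also have "A * W * mat_adjoint W = A" by (simp add: assoc_mult_mat[OF A W adjW] WW' right_mult_one_mat[OF A])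
  finally have "A = U * B * mat_adjoint U" by simp
  with U B UU UU' utB show ?case unfolding n_def by blast
qed




lemma mult3_index: assumes A: "(A::complex mat) \<in> carrier_mat n m" and B: "B \<in> carrier_mat m p"
  and C: "C \<in> carrier_mat p q" and i: "i < n" and j: "j < q"
  shows "(A * B * C) $$ (i,j) = (\<Sum>l<p. (\<Sum>k<m. A $$ (i,k) * B $$ (k,l)) * C $$ (l,j))"
proof -
  have AB: "A * B \<in> carrier_mat n p" using A B by simp
  show ?thesis unfolding mult_index_sum[OF AB C i j]
    by (rule sum.cong) (simp_all add: mult_index_sum[OF A B i])
qed

lemma sum_mset_mset_list: "(\<Sum>z\<in>#mset xs. f z) = (\<Sum>z\<leftarrow>xs. (f z :: real))"
  by (induction xs) auto

lemma proots_lin: "proots (\<Prod>a\<leftarrow>xs. [:- a, 1:]) = mset (xs :: complex list)"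
proof (induction xs)
  case (Cons a xs)
  have nz: "(\<Prod>a\<leftarrow>xs. [:- a, 1:]) \<noteq> (0 :: complex poly)" by (auto simp: prod_list_zero_iff)
  have "proots (\<Prod>a\<leftarrow>a # xs. [:- a, 1:]) = proots ([:- a, 1:] * (\<Prod>a\<leftarrow>xs. [:- a, 1:]))" by simp
  also have "\<dots> = proots [:- a, 1:] + proots (\<Prod>a\<leftarrow>xs. [:- a, 1:])"
    by (rule proots_mult) (use nz in simp_all)
  finally show ?case using Cons.IH by simp
qed simp

lemma hermitian_spectral:
  fixes A :: "complex mat"
  assumes A: "A \<in> carrier_mat n n" and herm: "\<And>i j. i < n \<Longrightarrow> j < n \<Longrightarrow> A $$ (i,j) = cnj (A $$ (j,i))"
  shows "\<exists>U (lam :: nat \<Rightarrow> real).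
   (\<forall>k<n. (\<Sum>i<n. (cmod (U $$ (i,k)))^2) = 1) \<and>
   (\<forall>i<n. \<forall>j<n. A $$ (i,j) = (\<Sum>k<n. U $$ (i,k) * complex_of_real (lam k) * cnj (U $$ (j,k)))) \<and>
   (\<forall>k<n. complex_of_real (lam k) = (\<Sum>i<n. \<Sum>j<n. cnj (U $$ (i,k)) * A $$ (i,j) * U $$ (j,k))) \<and>
   neg_trace A = (\<Sum>k<n. min (lam k) 0)"
proof -
  obtain U B where U: "U \<in> carrier_mat n n" and B: "B \<in> carrier_mat n n" and UU: "mat_adjoint U * U = 1\<^sub>m n"
    and UU': "U * mat_adjoint U = 1\<^sub>m n" and ut: "upper_triangular B" and AB: "A = U * B * mat_adjoint U"
    using unitary_schur[OF A] by blast
  have adjU: "mat_adjoint U \<in> carrier_mat n n" by (rule adj_carrier[OF U])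
  have adjA: "mat_adjoint A = A"
  proof (rule eq_matI)
    fix i j assume "i < dim_row A" "j < dim_col A"
    hence i: "i < n" and j: "j < n" using A by simp_all
    show "mat_adjoint A $$ (i,j) = A $$ (i,j)" using A i j herm[OF i j] by simp
  qed (use A in simp_all)
  have Bdef: "B = mat_adjoint U * A * U"
  proof -
    have "mat_adjoint U * A * U = mat_adjoint U * (U * B * mat_adjoint U) * U" unfolding AB ..
    also have "\<dots> = (mat_adjoint U * U) * B * (mat_adjoint U * U)"
      using U B adjU by (simp add: assoc_mult_mat[of _ n n _ n _ n])
    also have "\<dots> = B" unfolding UU using B by simp
    finally show ?thesis by simp
  qed
  have adjB: "mat_adjoint B = B"
  proof -
    have "mat_adjoint B = mat_adjoint U * mat_adjoint A * mat_adjoint (mat_adjoint U)"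
      unfolding Bdef using adjU A U
      by (simp add: adj_mult[of _ n n _ n] assoc_mult_mat[of _ n n _ n _ n])
    thus ?thesis unfolding adjA adj_adj Bdef[symmetric] .
  qed
  have Bherm: "B $$ (i,j) = cnj (B $$ (j,i))" if "i < n" "j < n" for i j
  proof -
    have "B $$ (i,j) = mat_adjoint B $$ (i,j)" unfolding adjB ..
    thus ?thesis using that B by simp
  qed
  have ut': "B $$ (i,j) = 0" if "i < n" "j < i" for i j
    using ut that carrier_matD(1)[OF B] unfolding upper_triangular_def by blast
  have Bdiag: "B $$ (i,j) = 0" if "i < n" "j < n" "i \<noteq> j" for i j
  proof (cases "j < i")
    case True thus ?thesis using ut' that by simp
  next
    case False
    hence "B $$ (j,i) = 0" using ut' that by simp
    thus ?thesis using Bherm[OF that(1,2)] by simp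
  qed
  define lam where "lam k = Re (B $$ (k,k))" for k
  have Breal: "B $$ (k,k) = complex_of_real (lam k)" if "k < n" for k
  proof -
    have e: "B $$ (k,k) = cnj (B $$ (k,k))" using Bherm[OF that that] .
    have "Im (B $$ (k,k)) = Im (cnj (B $$ (k,k)))" using e by (rule arg_cong)
    hence "Im (B $$ (k,k)) = - Im (B $$ (k,k))" by simp
    hence "Im (B $$ (k,k)) = 0" by simp
    thus ?thesis unfolding lam_def by (simp add: complex_eq_iff)
  qed
  have P1: "\<forall>k<n. (\<Sum>i<n. (cmod (U $$ (i,k)))^2) = 1"
  proof (intro allI impI)
    fix k assume k: "k < n"
    have "complex_of_real (\<Sum>i<n. (cmod (U $$ (i,k)))^2) = (\<Sum>i<n. mat_adjoint U $$ (k,i) * U $$ (i,k))"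
      unfolding of_real_sum
    proof (rule sum.cong)
      fix i assume "i \<in> {..<n}"
      hence "mat_adjoint U $$ (k,i) = cnj (U $$ (i,k))" using U k by simp
      thus "complex_of_real ((cmod (U $$ (i,k)))^2) = mat_adjoint U $$ (k,i) * U $$ (i,k)"
        unfolding complex_norm_square by (simp add: mult.commute)
    qed simp
    also have "\<dots> = (mat_adjoint U * U) $$ (k,k)" by (rule mult_index_sum[OF adjU U k k, symmetric])
    also have "\<dots> = 1" unfolding UU using k by simp
    finally show "(\<Sum>i<n. (cmod (U $$ (i,k)))^2) = 1" by (metis of_real_eq_1_iff)
  qed
  have P2: "\<forall>i<n. \<forall>j<n. A $$ (i,j) = (\<Sum>k<n. U $$ (i,k) * complex_of_real (lam k) * cnj (U $$ (j,k)))"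
  proof (intro allI impI)
    fix i j assume i: "i < n" and j: "j < n"
    have "A $$ (i,j) = (\<Sum>l<n. (\<Sum>k<n. U $$ (i,k) * B $$ (k,l)) * mat_adjoint U $$ (l,j))"
      unfolding AB by (rule mult3_index[OF U B adjU i j])
    also have "\<dots> = (\<Sum>l<n. U $$ (i,l) * complex_of_real (lam l) * cnj (U $$ (j,l)))"
    proof (rule sum.cong)
      fix l assume l: "l \<in> {..<n}"
      have "(\<Sum>k<n. U $$ (i,k) * B $$ (k,l)) = U $$ (i,l) * B $$ (l,l)"
      proof -
        have "(\<Sum>k<n. U $$ (i,k) * B $$ (k,l)) = U $$ (i,l) * B $$ (l,l) + (\<Sum>k\<in>{..<n}-{l}. U $$ (i,k) * B $$ (k,l))"
          by (rule sum.remove) (use l in simp_all)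
        also have "(\<Sum>k\<in>{..<n}-{l}. U $$ (i,k) * B $$ (k,l)) = 0"
          by (rule sum.neutral) (use l Bdiag in simp)
        finally show ?thesis by simp
      qed
      thus "(\<Sum>k<n. U $$ (i,k) * B $$ (k,l)) * mat_adjoint U $$ (l,j) = U $$ (i,l) * complex_of_real (lam l) * cnj (U $$ (j,l))"
        using l j U Breal[of l] by simp
    qed simp
    finally show "A $$ (i,j) = (\<Sum>k<n. U $$ (i,k) * complex_of_real (lam k) * cnj (U $$ (j,k)))" .
  qed
  have P3: "\<forall>k<n. complex_of_real (lam k) = (\<Sum>i<n. \<Sum>j<n. cnj (U $$ (i,k)) * A $$ (i,j) * U $$ (j,k))"
  proof (intro allI impI)
    fix k assume k: "k < n"
    have "complex_of_real (lam k) = B $$ (k,k)" using Breal[OF k] by simp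
    also have "\<dots> = (\<Sum>j<n. (\<Sum>i<n. mat_adjoint U $$ (k,i) * A $$ (i,j)) * U $$ (j,k))"
      unfolding Bdef by (rule mult3_index[OF adjU A U k k])
    also have "\<dots> = (\<Sum>j<n. \<Sum>i<n. cnj (U $$ (i,k)) * A $$ (i,j) * U $$ (j,k))"
      unfolding sum_distrib_right by (rule sum.cong, simp, rule sum.cong) (use U k in simp_all)
    also have "\<dots> = (\<Sum>i<n. \<Sum>j<n. cnj (U $$ (i,k)) * A $$ (i,j) * U $$ (j,k))"
      by (rule sum.swap)
    finally show "complex_of_real (lam k) = (\<Sum>i<n. \<Sum>j<n. cnj (U $$ (i,k)) * A $$ (i,j) * U $$ (j,k))" .
  qed
  have sim: "similar_mat A B"
    unfolding similar_mat_def similar_mat_wit_def Let_def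
    using A B U adjU UU UU' AB by (intro exI[of _ U] exI[of _ "mat_adjoint U"]) simp
  have cpB: "char_poly A = (\<Prod>a\<leftarrow>diag_mat B. [:- a, 1:])"
    unfolding char_poly_similar[OF sim] by (rule char_poly_upper_triangular[OF B ut])
  have "neg_trace A = sum_list (map (\<lambda>z. min (Re z) 0) (diag_mat B))"
    unfolding neg_trace_def cpB proots_lin by (rule sum_mset_mset_list)
  also have "\<dots> = (\<Sum>k<n. min (lam k) 0)"
    using B by (simp add: diag_mat_def sum_list_map_eq_sum_count lam_def atLeast0LessThan[symmetric] sum_list_sum_nth)
  finally have P4: "neg_trace A = (\<Sum>k<n. min (lam k) 0)" .
  show ?thesis using P1 P2 P3 P4 by blast
qed




definition qf :: "(nat \<Rightarrow> nat \<Rightarrow> complex) \<Rightarrow> nat \<Rightarrow> (nat \<Rightarrow> complex) \<Rightarrow> complex" where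
  "qf M n v = (\<Sum>i<n. \<Sum>j<n. cnj (v i) * M i j * v j)"

lemma trace_spec:
  assumes P2: "\<forall>i<n. \<forall>j<n. (A :: complex mat) $$ (i,j) = (\<Sum>k<n. U $$ (i,k) * complex_of_real (lam k) * cnj (U $$ (j,k)))"
  shows "(\<Sum>x<n. \<Sum>y<n. M x y * A $$ (y,x)) = (\<Sum>k<n. complex_of_real (lam k) * qf M n (\<lambda>i. U $$ (i,k)))"
proof -
  have "(\<Sum>x<n. \<Sum>y<n. M x y * A $$ (y,x)) = (\<Sum>x<n. \<Sum>y<n. \<Sum>k<n. M x y * (U $$ (y,k) * complex_of_real (lam k) * cnj (U $$ (x,k))))"
    by (rule sum.cong, simp, rule sum.cong, simp) (use P2 in \<open>simp add: sum_distrib_left\<close>)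
  also have "\<dots> = (\<Sum>x<n. \<Sum>k<n. \<Sum>y<n. M x y * (U $$ (y,k) * complex_of_real (lam k) * cnj (U $$ (x,k))))"
    by (rule sum.cong, simp, rule sum.swap)
  also have "\<dots> = (\<Sum>k<n. \<Sum>x<n. \<Sum>y<n. M x y * (U $$ (y,k) * complex_of_real (lam k) * cnj (U $$ (x,k))))"
    by (rule sum.swap)
  also have "\<dots> = (\<Sum>k<n. complex_of_real (lam k) * qf M n (\<lambda>i. U $$ (i,k)))"
    unfolding qf_def sum_distrib_left by (rule sum.cong, simp, rule sum.cong, simp, rule sum.cong, simp) (simp add: mult_ac)
  finally show ?thesis .
qed

lemma density_herm: assumes "density_matrix n g" "i < n" "j < n"
  shows "g $$ (i,j) = cnj (g $$ (j,i))"
proof -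
  have g: "g \<in> carrier_mat n n" and adj: "mat_adjoint g = g" using assms(1) unfolding density_matrix_def by blast+
  have "g $$ (i,j) = mat_adjoint g $$ (i,j)" unfolding adj ..
  thus ?thesis using g assms(2,3) by simp
qed

lemma density_qf: assumes "density_matrix n g"
  shows "0 \<le> Re (qf (\<lambda>i j. g $$ (i,j)) n v)" "Re (qf (\<lambda>i j. g $$ (i,j)) n v) \<le> (\<Sum>i<n. (cmod (v i))\<^sup>2)"
  using assms unfolding density_matrix_def qf_def by blast+

lemma min_le_mult: assumes "0 \<le> c" "c \<le> (1::real)" shows "min l 0 \<le> l * c"
proof (cases "l \<ge> 0")
  case True thus ?thesis using assms by simp
next
  case False
  hence "l * c \<ge> l * 1" using assms by (intro mult_left_mono_neg) auto
  thus ?thesis using False by simp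
qed

lemma lemmaA:
  assumes dm: "density_matrix n g" and A: "A \<in> carrier_mat n n"
    and herm: "\<And>i j. i < n \<Longrightarrow> j < n \<Longrightarrow> A $$ (i,j) = cnj (A $$ (j,i))"
  shows "neg_trace A \<le> Re (\<Sum>x<n. \<Sum>y<n. A $$ (x,y) * g $$ (y,x))"
proof -
  obtain U lam where P1: "\<forall>k<n. (\<Sum>i<n. (cmod (U $$ (i,k)))^2) = 1"
    and P2: "\<forall>i<n. \<forall>j<n. A $$ (i,j) = (\<Sum>k<n. U $$ (i,k) * complex_of_real (lam k) * cnj (U $$ (j,k)))"
    and P4: "neg_trace A = (\<Sum>k<n. min (lam k) 0)"
    using hermitian_spectral[OF A herm] by blast
  have "(\<Sum>x<n. \<Sum>y<n. A $$ (x,y) * g $$ (y,x)) = (\<Sum>y<n. \<Sum>x<n. g $$ (y,x) * A $$ (x,y))"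
    by (subst sum.swap, rule sum.cong[OF refl], rule sum.cong[OF refl], rule mult.commute)
  also have "\<dots> = (\<Sum>k<n. complex_of_real (lam k) * qf (\<lambda>i j. g $$ (i,j)) n (\<lambda>i. U $$ (i,k)))"
    by (rule trace_spec[OF P2])
  finally have eq: "Re (\<Sum>x<n. \<Sum>y<n. A $$ (x,y) * g $$ (y,x)) = (\<Sum>k<n. lam k * Re (qf (\<lambda>i j. g $$ (i,j)) n (\<lambda>i. U $$ (i,k))))"
    by simp
  show ?thesis unfolding eq P4
  proof (rule sum_mono)
    fix k assume k: "k \<in> {..<n}"
    show "min (lam k) 0 \<le> lam k * Re (qf (\<lambda>i j. g $$ (i,j)) n (\<lambda>i. U $$ (i,k)))"
      by (rule min_le_mult) (use density_qf[OF dm, of "\<lambda>i. U $$ (i,k)"] P1 k in auto)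
  qed
qed

lemma lemmaB:
  assumes dm: "density_matrix n g"
    and pos: "\<And>v. 0 \<le> Re (qf M n v)"
  shows "0 \<le> Re (\<Sum>x<n. \<Sum>y<n. M x y * g $$ (y,x))"
proof -
  have g: "g \<in> carrier_mat n n" using dm unfolding density_matrix_def by blast
  obtain U lam where 
    P2: "\<forall>i<n. \<forall>j<n. g $$ (i,j) = (\<Sum>k<n. U $$ (i,k) * complex_of_real (lam k) * cnj (U $$ (j,k)))"
    and P3: "\<forall>k<n. complex_of_real (lam k) = (\<Sum>i<n. \<Sum>j<n. cnj (U $$ (i,k)) * g $$ (i,j) * U $$ (j,k))"
    using hermitian_spectral[OF g density_herm[OF dm]] by blast
  have lam: "0 \<le> lam k" if "k < n" for k
  proof -
    have e: "complex_of_real (lam k) = qf (\<lambda>i j. g $$ (i,j)) n (\<lambda>i. U $$ (i,k))"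
      using P3 that unfolding qf_def by blast
    have "lam k = Re (complex_of_real (lam k))" by simp
    also have "\<dots> = Re (qf (\<lambda>i j. g $$ (i,j)) n (\<lambda>i. U $$ (i,k)))" by (simp only: e)
    finally have "lam k = Re (qf (\<lambda>i j. g $$ (i,j)) n (\<lambda>i. U $$ (i,k)))" .
    thus ?thesis using density_qf(1)[OF dm] by simp
  qed
  have "Re (\<Sum>x<n. \<Sum>y<n. M x y * g $$ (y,x)) = (\<Sum>k<n. lam k * Re (qf M n (\<lambda>i. U $$ (i,k))))"
    unfolding trace_spec[OF P2] by simp
  also have "\<dots> \<ge> 0" by (rule sum_nonneg, rule mult_nonneg_nonneg) (use lam pos in simp_all)
  finally show ?thesis .
qed




definition tf :: "nat \<Rightarrow> nat \<Rightarrow> nat \<Rightarrow> nat" where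
  "tf L a b = min (if a \<le> b then b - a else a - b) (L - (if a \<le> b then b - a else a - b))"

lemma lat_dist_tf: "lat_dist d L x y = (\<Sum>i<d. tf L (site_coord L i x) (site_coord L i y))"
  unfolding lat_dist_def tf_def Let_def ..

lemma tf_sym: "tf L a b = tf L b a"
  unfolding tf_def by auto

lemma lat_dist_sym: "lat_dist d L x y = lat_dist d L y x"
  unfolding lat_dist_tf by (rule sum.cong) (simp_all add: tf_sym)

lemma lat_dist_self: "lat_dist d L x x = 0"
  unfolding lat_dist_tf tf_def by simp

lemma coord_lt: "0 < L \<Longrightarrow> site_coord L i k < L"
  unfolding site_coord_def by simp

lemma tf0: "a < L \<Longrightarrow> b < L \<Longrightarrow> tf L a b = 0 \<Longrightarrow> a = b"
  unfolding tf_def by (auto split: if_splits)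

lemma tf1: assumes "a < L" "b < L" "tf L a b = 1"
  shows "b = (a + 1) mod L \<or> b = (a + L - 1) mod L"
proof -
  define t where "t = (if a \<le> b then b - a else a - b)"
  have m: "min t (L - t) = 1" using assms(3) unfolding tf_def t_def .
  show ?thesis
  proof (cases "a \<le> b")
    case True
    hence tt: "t = b - a" unfolding t_def by simp
    show ?thesis
    proof (cases "t = 1")
      case True
      hence "b = a + 1" using tt \<open>a \<le> b\<close> by simp
      thus ?thesis using assms by simp
    next
      case False
      hence "L - t = 1" using m by (simp add: min_def split: if_splits)
      hence "a = 0" "b = L - 1" using tt assms True by auto
      thus ?thesis using assms by simp
    qed
  next
    case False
    hence tt: "t = a - b" unfolding t_def by simp
    show ?thesis
    proof (cases "t = 1")
      case True
      hence "a = b + 1" using tt False by simp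
      hence "(a + L - 1) mod L = b" using assms by simp
      thus ?thesis by simp
    next
      case False
      hence "L - t = 1" using m by (simp add: min_def split: if_splits)
      hence "b = 0" "a = L - 1" using tt assms \<open>\<not> a \<le> b\<close> by auto
      thus ?thesis using assms by simp
    qed
  qed
qed

lemma digits_inj:
  assumes "a < L ^ d" "b < L ^ d" "\<forall>i<d. site_coord L i a = site_coord L i b"
  shows "a = b"
  using assms
proof (induction d arbitrary: a b)
  case 0 thus ?case by simp
next
  case (Suc d)
  have L: "0 < L" using Suc.prems(1) by (cases L) auto
  have m: "a mod L = b mod L" using Suc.prems(3)[rule_format, of 0] unfolding site_coord_def by simp
  have "a div L < L ^ d" using Suc.prems(1) L by (simp add: div_less_iff_less_mult mult.commute)
  moreover have "b div L < L ^ d" using Suc.prems(2) L by (simp add: div_less_iff_less_mult mult.commute)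
  moreover have "\<forall>i<d. site_coord L i (a div L) = site_coord L i (b div L)"
  proof (intro allI impI)
    fix i assume "i < d"
    hence "site_coord L (Suc i) a = site_coord L (Suc i) b" using Suc.prems(3) by simp
    thus "site_coord L i (a div L) = site_coord L i (b div L)"
      unfolding site_coord_def by (simp add: div_mult2_eq)
  qed
  ultimately have "a div L = b div L" using Suc.IH by blast
  thus ?case using m by (metis div_mult_mod_eq)
qed

lemma sum_eq_1_nat:
  assumes "finite S" "(\<Sum>j\<in>S. f j) = (1::nat)"
  shows "\<exists>i\<in>S. f i = 1 \<and> (\<forall>j\<in>S. j \<noteq> i \<longrightarrow> f j = 0)"
proof -
  obtain i where i: "i \<in> S" "f i \<noteq> 0" using assms(2) by (metis sum.neutral zero_neq_one)
  have le: "f i \<le> 1" using member_le_sum[OF i(1), of f] assms by simp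
  hence fi: "f i = 1" using i(2) by simp
  have "(\<Sum>j\<in>S. f j) = f i + (\<Sum>j\<in>S-{i}. f j)" by (rule sum.remove[OF assms(1) i(1)])
  hence "(\<Sum>j\<in>S-{i}. f j) = 0" using assms(2) fi by simp
  hence "\<forall>j\<in>S-{i}. f j = 0" using assms(1) by simp
  thus ?thesis using i(1) fi by blast
qed

lemma nbr_card:
  assumes L: "0 < L"
  shows "card {y. y < n_sites d L \<and> lat_dist d L x y = 1} \<le> 2 * d"
proof -
  define c where "c i k = site_coord L i k" for i k
  define S where "S i = {y. y < L ^ d \<and> (\<forall>j<d. j \<noteq> i \<longrightarrow> c j y = c j x) \<and>
      c i y \<in> {(c i x + 1) mod L, (c i x + L - 1) mod L}}" for i
  have sub: "{y. y < n_sites d L \<and> lat_dist d L x y = 1} \<subseteq> (\<Union>i\<in>{..<d}. S i)"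
  proof
    fix y assume "y \<in> {y. y < n_sites d L \<and> lat_dist d L x y = 1}"
    hence y: "y < L ^ d" and dist: "(\<Sum>i<d. tf L (c i x) (c i y)) = 1"
      unfolding n_sites_def lat_dist_tf c_def by auto
    obtain i where i: "i < d" "tf L (c i x) (c i y) = 1"
      and oth: "\<forall>j<d. j \<noteq> i \<longrightarrow> tf L (c j x) (c j y) = 0"
      using sum_eq_1_nat[OF _ dist] by auto
    have "\<forall>j<d. j \<noteq> i \<longrightarrow> c j y = c j x"
      using oth tf0 coord_lt[OF L] unfolding c_def by metis
    moreover have "c i y \<in> {(c i x + 1) mod L, (c i x + L - 1) mod L}"
      using tf1[OF coord_lt[OF L] coord_lt[OF L] i(2)[unfolded c_def]] unfolding c_def by simp
    ultimately have "y \<in> S i" unfolding S_def using y by blast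
    thus "y \<in> (\<Union>i\<in>{..<d}. S i)" using i(1) by blast
  qed
  have cardS: "card (S i) \<le> 2" for i
  proof -
    have inj: "inj_on (c i) (S i)"
    proof (rule inj_onI)
      fix y1 y2 assume y1: "y1 \<in> S i" and y2: "y2 \<in> S i" and eq: "c i y1 = c i y2"
      have h1: "\<forall>j<d. j \<noteq> i \<longrightarrow> c j y1 = c j x" using y1 unfolding S_def by blast
      have h2: "\<forall>j<d. j \<noteq> i \<longrightarrow> c j y2 = c j x" using y2 unfolding S_def by blast
      have "\<forall>j<d. site_coord L j y1 = site_coord L j y2"
      proof (intro allI impI)
        fix j assume j: "j < d"
        show "site_coord L j y1 = site_coord L j y2"
        proof (cases "j = i")
          case True thus ?thesis using eq unfolding c_def by simp
        next
          case False thus ?thesis using h1 h2 j unfolding c_def by simp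
        qed
      qed
      thus "y1 = y2" using digits_inj y1 y2 unfolding S_def by blast
    qed
    have "card (S i) = card (c i ` S i)" using card_image[OF inj] by simp
    also have "\<dots> \<le> card {(c i x + 1) mod L, (c i x + L - 1) mod L}"
      by (rule card_mono) (auto simp: S_def)
    also have "\<dots> \<le> 2" by (simp add: card_insert_if)
    finally show ?thesis .
  qed
  have "card {y. y < n_sites d L \<and> lat_dist d L x y = 1} \<le> card (\<Union>i\<in>{..<d}. S i)"
    by (rule card_mono[OF _ sub]) (auto simp: S_def)
  also have "\<dots> \<le> (\<Sum>i<d. card (S i))" by (rule card_UN_le) simp
  also have "\<dots> \<le> (\<Sum>i<d. 2)" by (rule sum_mono) (rule cardS)
  finally show ?thesis by simp
qed




lemma cmod_sq: "cmod z * cmod z = Re z * Re z + Im z * Im z"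
  by (metis cmod_power2 power2_eq_square)

lemma sum_if2:
  assumes "(x::nat) < n" "y < n" "x \<noteq> y"
  shows "(\<Sum>j<n. if j = x then p j else if j = y then q j else (0::'a::comm_monoid_add)) = p x + q y"
proof -
  have "(\<Sum>j<n. if j = x then p j else if j = y then q j else 0) = (\<Sum>j<n. (if j = x then p j else 0) + (if j = y then q j else 0))"
    by (rule sum.cong) (use assms(3) in auto)
  also have "\<dots> = p x + q y" unfolding sum.distrib using assms(1,2) by (simp add: sum.delta)
  finally show ?thesis .
qed

lemma qf_two:
  assumes "x < n" "y < n" "x \<noteq> y"
  shows "qf M n (\<lambda>i. if i = x then a else if i = y then b else 0)
       = cnj a * M x x * a + cnj a * M x y * b + (cnj b * M y x * a + cnj b * M y y * b)"
proof -
  define v where "v = (\<lambda>i. if i = x then a else if i = y then b else 0)"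
  have inner: "(\<Sum>j<n. cnj (v i) * M i j * v j) = cnj (v i) * M i x * a + cnj (v i) * M i y * b" for i
  proof -
    have "(\<Sum>j<n. cnj (v i) * M i j * v j) = (\<Sum>j<n. if j = x then cnj (v i) * M i j * a else if j = y then cnj (v i) * M i j * b else 0)"
      by (rule sum.cong) (simp_all add: v_def)
    also have "\<dots> = cnj (v i) * M i x * a + cnj (v i) * M i y * b" by (rule sum_if2[OF assms])
    finally show ?thesis .
  qed
  have "qf M n v = (\<Sum>i<n. cnj (v i) * M i x * a + cnj (v i) * M i y * b)"
    unfolding qf_def inner ..
  also have "\<dots> = (\<Sum>i<n. if i = x then cnj a * M x x * a + cnj a * M x y * b else if i = y then cnj b * M y x * a + cnj b * M y y * b else 0)"
    by (rule sum.cong) (simp_all add: v_def)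
  also have "\<dots> = cnj a * M x x * a + cnj a * M x y * b + (cnj b * M y x * a + cnj b * M y y * b)"
    by (rule sum_if2[OF assms])
  finally show ?thesis unfolding v_def .
qed

lemma norm_two:
  assumes "(x::nat) < n" "y < n" "x \<noteq> y"
  shows "(\<Sum>i<n. (cmod (if i = x then a else if i = y then b else 0))\<^sup>2) = (cmod a)\<^sup>2 + (cmod b)\<^sup>2"
proof -
  have "(\<Sum>i<n. (cmod (if i = x then a else if i = y then b else 0))\<^sup>2) = (\<Sum>i<n. if i = x then (cmod a)\<^sup>2 else if i = y then (cmod b)\<^sup>2 else 0)"
    by (rule sum.cong) simp_all
  also have "\<dots> = (cmod a)\<^sup>2 + (cmod b)\<^sup>2" by (rule sum_if2[OF assms])
  finally show ?thesis .
qed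

lemma cross_bound:
  assumes dm: "density_matrix n g" and xy: "x < n" "y < n" "x \<noteq> y" and dpos: "0 < \<delta>"
    and gx: "Re (g $$ (x,x)) < \<delta>"
  shows "Re (g $$ (x,y)) + Re (g $$ (y,x)) \<le> 2 * sqrt \<delta>"
proof -
  let ?G = "\<lambda>i j. g $$ (i,j)"
  have "Re (qf ?G n (\<lambda>i. if i = x then 0 else if i = y then 1 else 0)) \<le> (\<Sum>i<n. (cmod (if i = x then 0 else if i = y then 1 else 0))\<^sup>2)"
    by (rule density_qf(2)[OF dm])
  hence gy: "Re (g $$ (y,y)) \<le> 1" unfolding qf_two[OF xy] norm_two[OF xy] by simp
  define r where "r = 1 / sqrt \<delta>"
  have r: "0 < r" unfolding r_def using dpos by simp
  have rd: "r * r * \<delta> = 1" unfolding r_def using dpos by (simp add: field_simps)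
  have "0 \<le> Re (qf ?G n (\<lambda>i. if i = x then complex_of_real r else if i = y then -1 else 0))"
    by (rule density_qf(1)[OF dm])
  hence "0 \<le> r * r * Re (g $$ (x,x)) - r * Re (g $$ (x,y)) - r * Re (g $$ (y,x)) + Re (g $$ (y,y))"
    unfolding qf_two[OF xy] by (simp add: algebra_simps)
  moreover have "r * r * Re (g $$ (x,x)) \<le> r * r * \<delta>" using gx r by (intro mult_left_mono) auto
  ultimately have "r * (Re (g $$ (x,y)) + Re (g $$ (y,x))) \<le> 2" using rd gy by (simp add: algebra_simps)
  hence "Re (g $$ (x,y)) + Re (g $$ (y,x)) \<le> 2 / r" using r by (simp add: field_simps mult.commute)
  thus ?thesis unfolding r_def by simp
qed

definition nlap :: "nat \<Rightarrow> nat \<Rightarrow> nat \<Rightarrow> nat \<Rightarrow> real" where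
  "nlap d L x y = (if x = y then real (2 * d) else 0) - (if lat_dist d L x y = 1 then 1 else 0)"

lemma re_cnj_le: "Re (cnj a * b) \<le> ((cmod a)\<^sup>2 + (cmod b)\<^sup>2) / 2"
proof -
  have "0 \<le> (Re a - Re b)\<^sup>2 + (Im a - Im b)\<^sup>2" by simp
  thus ?thesis unfolding cmod_power2 by (simp add: power2_eq_square algebra_simps)
qed

lemma deg_bound: assumes "0 < L"
  shows "(\<Sum>y<n_sites d L. if lat_dist d L x y = 1 then 1 else 0) \<le> real (2 * d)"
proof -
  have "(\<Sum>y<n_sites d L. if lat_dist d L x y = 1 then 1 else (0::real)) = (\<Sum>y\<in>{y\<in>{..<n_sites d L}. lat_dist d L x y = 1}. 1)"
    by (rule sum.inter_filter[symmetric]) simp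
  also have "\<dots> = real (card {y. y < n_sites d L \<and> lat_dist d L x y = 1})" by simp
  also have "\<dots> \<le> real (2 * d)" using nbr_card[OF assms, of d x] by (simp only: of_nat_le_iff)
  finally show ?thesis .
qed

lemma lap_pos: assumes L: "0 < L"
  shows "0 \<le> Re (qf (\<lambda>x y. complex_of_real (nlap d L x y)) (n_sites d L) w)"
proof -
  define n where "n = n_sites d L"
  define T where "T x y = (if lat_dist d L x y = 1 then 1 else (0::real))" for x y
  define N where "N x = (cmod (w x))\<^sup>2" for x
  have Tsym: "T x y = T y x" for x y unfolding T_def using lat_dist_sym by metis
  have T0: "0 \<le> T x y" for x y unfolding T_def by simp
  have deg: "(\<Sum>y<n. T x y) \<le> real (2 * d)" for x unfolding T_def n_def by (rule deg_bound[OF L])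
  have "Re (qf (\<lambda>x y. complex_of_real (nlap d L x y)) n w) = (\<Sum>x<n. \<Sum>y<n. nlap d L x y * Re (cnj (w x) * w y))"
    unfolding qf_def Re_sum by (rule sum.cong, simp, rule sum.cong, simp) (simp add: algebra_simps)
  also have "\<dots> = (\<Sum>x<n. \<Sum>y<n. (if x = y then real (2 * d) * N x else 0)) - (\<Sum>x<n. \<Sum>y<n. T x y * Re (cnj (w x) * w y))"
    unfolding sum_subtractf[symmetric] nlap_def T_def N_def
    by (rule sum.cong, simp, rule sum.cong, simp) (auto simp: cmod_sq power2_eq_square algebra_simps)
  also have "(\<Sum>x<n. \<Sum>y<n. (if x = y then real (2 * d) * N x else 0)) = (\<Sum>x<n. real (2 * d) * N x)"
    by simp
  finally have eq: "Re (qf (\<lambda>x y. complex_of_real (nlap d L x y)) n w) = (\<Sum>x<n. real (2 * d) * N x) - (\<Sum>x<n. \<Sum>y<n. T x y * Re (cnj (w x) * w y))" .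
  have "(\<Sum>x<n. \<Sum>y<n. T x y * Re (cnj (w x) * w y)) \<le> (\<Sum>x<n. \<Sum>y<n. T x y * ((N x + N y) / 2))"
    by (rule sum_mono, rule sum_mono, rule mult_left_mono) (use re_cnj_le T0 in \<open>simp_all add: N_def\<close>)
  also have "\<dots> = ((\<Sum>x<n. \<Sum>y<n. T x y * N x) + (\<Sum>x<n. \<Sum>y<n. T x y * N y)) / 2"
    by (simp add: sum_divide_distrib sum.distrib distrib_left add_divide_distrib)
  also have "(\<Sum>x<n. \<Sum>y<n. T x y * N y) = (\<Sum>x<n. \<Sum>y<n. T x y * N x)"
    by (subst sum.swap) (simp add: Tsym)
  also have "(\<Sum>x<n. \<Sum>y<n. T x y * N x) = (\<Sum>x<n. (\<Sum>y<n. T x y) * N x)"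
    by (simp add: sum_distrib_right)
  also have "\<dots> \<le> (\<Sum>x<n. real (2 * d) * N x)"
    by (rule sum_mono, rule mult_right_mono) (use deg in \<open>simp_all add: N_def\<close>)
  finally have "(\<Sum>x<n. \<Sum>y<n. T x y * Re (cnj (w x) * w y)) \<le> (\<Sum>x<n. real (2 * d) * N x)" by simp
  thus ?thesis using eq unfolding n_def by simp
qed




definition kr :: "nat \<Rightarrow> nat \<Rightarrow> real \<Rightarrow> nat \<Rightarrow> nat \<Rightarrow> real" where
  "kr d L \<mu> x y = nlap d L x y - (if x = y then \<mu> else 0)"

lemma Kmu_carrier: "Kmu d L \<mu> \<in> carrier_mat (n_sites d L) (n_sites d L)"
  by (rule carrier_matI) (simp_all add: Kmu_def lapl_def hopT_def)

lemma Kmu_index: assumes "x < n_sites d L" "y < n_sites d L"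
  shows "Kmu d L \<mu> $$ (x,y) = complex_of_real (kr d L \<mu> x y)"
  using assms unfolding Kmu_def lapl_def hopT_def kr_def nlap_def by simp

lemma kr_sym: "kr d L \<mu> x y = kr d L \<mu> y x"
proof -
  have "lat_dist d L x y = lat_dist d L y x" by (rule lat_dist_sym)
  thus ?thesis unfolding kr_def nlap_def by auto
qed

lemma projP_carrier: "projP d L A \<in> carrier_mat (n_sites d L) (n_sites d L)"
  unfolding projP_def by simp

lemma projP_index: "x < n_sites d L \<Longrightarrow> y < n_sites d L \<Longrightarrow> projP d L A $$ (x,y) = (if x = y \<and> x \<in> A then 1 else 0)"
  unfolding projP_def by simp

lemma PKP_index:
  assumes x: "x < n_sites d L" and y: "y < n_sites d L"
  shows "(projP d L S * Kmu d L \<mu> * projP d L S) $$ (x,y) = (if x \<in> S \<and> y \<in> S then complex_of_real (kr d L \<mu> x y) else 0)"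
proof -
  let ?n = "n_sites d L"
  have inner: "(\<Sum>k<?n. projP d L S $$ (x,k) * Kmu d L \<mu> $$ (k,l)) = (if x \<in> S then Kmu d L \<mu> $$ (x,l) else 0)" for l
  proof -
    have "(\<Sum>k<?n. projP d L S $$ (x,k) * Kmu d L \<mu> $$ (k,l)) = (\<Sum>k<?n. if k = x then (if x \<in> S then Kmu d L \<mu> $$ (x,l) else 0) else 0)"
      by (rule sum.cong) (use x in \<open>auto simp: projP_index\<close>)
    also have "\<dots> = (if x \<in> S then Kmu d L \<mu> $$ (x,l) else 0)" using x by (simp add: sum.delta)
    finally show ?thesis .
  qed
  have "(projP d L S * Kmu d L \<mu> * projP d L S) $$ (x,y) = (\<Sum>l<?n. (\<Sum>k<?n. projP d L S $$ (x,k) * Kmu d L \<mu> $$ (k,l)) * projP d L S $$ (l,y))"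
    by (rule mult3_index[OF projP_carrier Kmu_carrier projP_carrier x y])
  also have "\<dots> = (\<Sum>l<?n. if l = y then (if x \<in> S \<and> y \<in> S then Kmu d L \<mu> $$ (x,y) else 0) else 0)"
    unfolding inner by (rule sum.cong) (use y in \<open>auto simp: projP_index\<close>)
  also have "\<dots> = (if x \<in> S \<and> y \<in> S then Kmu d L \<mu> $$ (x,y) else 0)" using y by (simp add: sum.delta)
  finally show ?thesis using Kmu_index[OF x y] by simp
qed

lemma trace_KG: assumes g: "g \<in> carrier_mat (n_sites d L) (n_sites d L)"
  shows "Re (mat_trace (Kmu d L \<mu> * g)) = (\<Sum>x<n_sites d L. \<Sum>y<n_sites d L. kr d L \<mu> x y * Re (g $$ (y,x)))"
proof -
  let ?n = "n_sites d L"
  have "mat_trace (Kmu d L \<mu> * g) = (\<Sum>x<?n. (Kmu d L \<mu> * g) $$ (x,x))"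
    unfolding mat_trace_def using Kmu_carrier[of d L \<mu>] by simp
  also have "\<dots> = (\<Sum>x<?n. \<Sum>y<?n. Kmu d L \<mu> $$ (x,y) * g $$ (y,x))"
    by (rule sum.cong[OF refl], rule mult_index_sum[OF Kmu_carrier g]) simp_all
  also have "\<dots> = (\<Sum>x<?n. \<Sum>y<?n. complex_of_real (kr d L \<mu> x y) * g $$ (y,x))"
    by (rule sum.cong[OF refl], rule sum.cong[OF refl]) (simp add: Kmu_index)
  finally show ?thesis by simp
qed




theorem lemma3p1:
  fixes d L :: nat and \<mu> \<delta> :: real and \<gamma> :: "complex mat"
  assumes "d \<ge> 1" and "L \<ge> 1"
    and "\<mu> > 0" and "\<delta> > 0"
    and "density_matrix (n_sites d L) \<gamma>"
  defines "\<rho> \<equiv> \<lambda>x. Re (\<gamma> $$ (x, x))"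
  defines "\<Omega> \<equiv> {x \<in> {..<n_sites d L}. \<rho> x < \<delta>}"
  shows "Re (mat_trace (Kmu d L \<mu> * \<gamma>)) \<ge>
           neg_trace (projP d L ({..<n_sites d L} - \<Omega>) * Kmu d L \<mu> * projP d L ({..<n_sites d L} - \<Omega>))
           - 4 * real d * sqrt \<delta> * real (card (lat_boundary d L \<Omega>))
           - \<mu> * (\<Sum>x\<in>\<Omega>. \<rho> x)"
proof -
  define n where "n = n_sites d L"
  have Lpos: "0 < L" using assms(2) by simp
  have dpos: "0 < \<delta>" using assms(4) .
  have dm: "density_matrix n \<gamma>" using assms(5) unfolding n_def .
  have g: "\<gamma> \<in> carrier_mat n n" using dm unfolding density_matrix_def by blast
  define S where "S = {..<n} - \<Omega>"
  have memO: "x \<in> \<Omega> \<longleftrightarrow> x < n \<and> \<rho> x < \<delta>" for x unfolding \<Omega>_def n_def by simp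
  have memS: "x \<in> S \<longleftrightarrow> x < n \<and> \<not> \<rho> x < \<delta>" for x unfolding S_def using memO[of x] by auto
  define F where "F x y = kr d L \<mu> x y * Re (\<gamma> $$ (y,x))" for x y
  define A1 where "A1 x y = (if x \<in> S \<and> y \<in> S then F x y else 0)" for x y
  define A2 where "A2 x y = (if x \<in> \<Omega> \<and> y \<in> \<Omega> then F x y else 0)" for x y
  define A3 where "A3 x y = (if x \<in> \<Omega> \<and> y \<in> S then F x y else 0)" for x y
  define A4 where "A4 x y = (if x \<in> S \<and> y \<in> \<Omega> then F x y else 0)" for x y
  define A5 where "A5 x y = (if x \<in> \<Omega> \<and> y \<in> S then F y x else 0)" for x y
  have tr: "Re (mat_trace (Kmu d L \<mu> * \<gamma>)) = (\<Sum>x<n. \<Sum>y<n. F x y)"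
    unfolding F_def n_def by (rule trace_KG[OF g[unfolded n_def]])
  have "(\<Sum>x<n. \<Sum>y<n. F x y) = (\<Sum>x<n. \<Sum>y<n. A1 x y + A2 x y + A3 x y + A4 x y)"
    by (rule sum.cong[OF refl], rule sum.cong[OF refl]) (auto simp: A1_def A2_def A3_def A4_def memO memS)
  also have "\<dots> = (\<Sum>x<n. \<Sum>y<n. A1 x y) + (\<Sum>x<n. \<Sum>y<n. A2 x y) + (\<Sum>x<n. \<Sum>y<n. A3 x y) + (\<Sum>x<n. \<Sum>y<n. A4 x y)"
    by (simp add: sum.distrib)
  also have "(\<Sum>x<n. \<Sum>y<n. A4 x y) = (\<Sum>x<n. \<Sum>y<n. A5 x y)"
    unfolding A4_def A5_def by (subst sum.swap) (rule sum.cong[OF refl], rule sum.cong[OF refl], auto)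
  finally have split: "Re (mat_trace (Kmu d L \<mu> * \<gamma>)) = (\<Sum>x<n. \<Sum>y<n. A1 x y) + (\<Sum>x<n. \<Sum>y<n. A2 x y) + (\<Sum>x<n. \<Sum>y<n. A3 x y + A5 x y)"
    unfolding tr by (simp add: sum.distrib)

  define A where "A = projP d L S * Kmu d L \<mu> * projP d L S"
  have Ac: "A \<in> carrier_mat n n" unfolding A_def n_def using projP_carrier Kmu_carrier by (metis mult_carrier_mat)
  have Aidx: "A $$ (x,y) = (if x \<in> S \<and> y \<in> S then complex_of_real (kr d L \<mu> x y) else 0)" if "x < n" "y < n" for x y
    unfolding A_def using PKP_index that unfolding n_def by blast
  have Aherm: "A $$ (i,j) = cnj (A $$ (j,i))" if "i < n" "j < n" for i j
    using Aidx[OF that] Aidx[OF that(2,1)] kr_sym[of d L \<mu> i j] by auto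
  have P1: "neg_trace A \<le> Re (\<Sum>x<n. \<Sum>y<n. A $$ (x,y) * \<gamma> $$ (y,x))"
    by (rule lemmaA[OF dm Ac Aherm])
  have "Re (\<Sum>x<n. \<Sum>y<n. A $$ (x,y) * \<gamma> $$ (y,x)) = (\<Sum>x<n. \<Sum>y<n. A1 x y)"
    unfolding Re_sum by (rule sum.cong[OF refl], rule sum.cong[OF refl]) (simp add: Aidx A1_def F_def)
  with P1 have part1: "neg_trace A \<le> (\<Sum>x<n. \<Sum>y<n. A1 x y)" by simp

  define B2 where "B2 x y = (if x \<in> \<Omega> \<and> y \<in> \<Omega> then nlap d L x y * Re (\<gamma> $$ (y,x)) else 0)" for x y
  define B3 where "B3 x y = (if y = x then (if x \<in> \<Omega> then \<mu> * \<rho> x else 0) else 0)" for x y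
  have "(\<Sum>x<n. \<Sum>y<n. A2 x y) = (\<Sum>x<n. \<Sum>y<n. B2 x y - B3 x y)"
    by (rule sum.cong[OF refl], rule sum.cong[OF refl]) (auto simp: A2_def B2_def B3_def F_def kr_def \<rho>_def algebra_simps)
  also have "\<dots> = (\<Sum>x<n. \<Sum>y<n. B2 x y) - (\<Sum>x<n. \<Sum>y<n. B3 x y)" by (simp add: sum_subtractf)
  finally have A2eq: "(\<Sum>x<n. \<Sum>y<n. A2 x y) = (\<Sum>x<n. \<Sum>y<n. B2 x y) - (\<Sum>x<n. \<Sum>y<n. B3 x y)" .
  define M where "M x y = complex_of_real (if x \<in> \<Omega> \<and> y \<in> \<Omega> then nlap d L x y else 0)" for x y
  have Mpos: "0 \<le> Re (qf M n v)" for v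
  proof -
    define w where "w i = (if i \<in> \<Omega> then v i else 0)" for i
    have "qf M n v = qf (\<lambda>x y. complex_of_real (nlap d L x y)) n w"
      unfolding qf_def by (rule sum.cong[OF refl], rule sum.cong[OF refl]) (simp add: M_def w_def)
    thus ?thesis using lap_pos[OF Lpos, of d w] unfolding n_def by simp
  qed
  have "0 \<le> Re (\<Sum>x<n. \<Sum>y<n. M x y * \<gamma> $$ (y,x))" by (rule lemmaB[OF dm Mpos])
  also have "Re (\<Sum>x<n. \<Sum>y<n. M x y * \<gamma> $$ (y,x)) = (\<Sum>x<n. \<Sum>y<n. B2 x y)"
    unfolding Re_sum by (rule sum.cong[OF refl], rule sum.cong[OF refl]) (simp add: M_def B2_def)
  finally have B2pos: "0 \<le> (\<Sum>x<n. \<Sum>y<n. B2 x y)" .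
  have "(\<Sum>x<n. \<Sum>y<n. B3 x y) = (\<Sum>x<n. if x \<in> \<Omega> then \<mu> * \<rho> x else 0)"
    unfolding B3_def by (rule sum.cong[OF refl]) (simp add: sum.delta)
  also have "\<dots> = (\<Sum>x\<in>{x\<in>{..<n}. x \<in> \<Omega>}. \<mu> * \<rho> x)" by (rule sum.inter_filter[symmetric]) simp
  also have "{x\<in>{..<n}. x \<in> \<Omega>} = \<Omega>" using memO by auto
  finally have B3eq: "(\<Sum>x<n. \<Sum>y<n. B3 x y) = \<mu> * (\<Sum>x\<in>\<Omega>. \<rho> x)" by (simp add: sum_distrib_left)

  define bd where "bd = lat_boundary d L \<Omega>"
  define B4 where "B4 x y = (if x \<in> \<Omega> \<and> y \<in> S \<and> lat_dist d L x y = 1 then 2 * sqrt \<delta> else 0)" for x y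
  have A35: "- B4 x y \<le> A3 x y + A5 x y" if "x < n" "y < n" for x y
  proof (cases "x \<in> \<Omega> \<and> y \<in> S")
    case True
    hence xy: "x \<noteq> y" using memO memS by auto
    have krxy: "kr d L \<mu> x y = - (if lat_dist d L x y = 1 then 1 else 0)" unfolding kr_def nlap_def using xy by simp
    have kryx: "kr d L \<mu> y x = kr d L \<mu> x y" by (rule kr_sym)
    show ?thesis
    proof (cases "lat_dist d L x y = 1")
      case True
      have "Re (\<gamma> $$ (x,y)) + Re (\<gamma> $$ (y,x)) \<le> 2 * sqrt \<delta>"
        by (rule cross_bound[OF dm that xy dpos]) (use \<open>x \<in> \<Omega> \<and> y \<in> S\<close> memO \<rho>_def in simp)
      thus ?thesis using \<open>x \<in> \<Omega> \<and> y \<in> S\<close> True unfolding A3_def A5_def B4_def F_def kryx krxy by simp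
    next
      case False
      thus ?thesis using \<open>x \<in> \<Omega> \<and> y \<in> S\<close> unfolding A3_def A5_def B4_def F_def kryx krxy by simp
    qed
  next
    case False
    hence "A3 x y = 0" "A5 x y = 0" "B4 x y = 0" unfolding A3_def A5_def B4_def by auto
    thus ?thesis by simp
  qed
  have B4row: "(\<Sum>y<n. B4 x y) \<le> (if x \<in> bd then 2 * sqrt \<delta> * real (2 * d) else 0)" for x
  proof (cases "x \<in> bd")
    case True
    have "(\<Sum>y<n. B4 x y) \<le> (\<Sum>y<n. 2 * sqrt \<delta> * (if lat_dist d L x y = 1 then 1 else 0))"
      by (rule sum_mono) (use dpos in \<open>simp add: B4_def\<close>)
    also have "\<dots> = 2 * sqrt \<delta> * (\<Sum>y<n. (if lat_dist d L x y = 1 then 1 else 0))"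
      by (simp add: sum_distrib_left)
    also have "\<dots> \<le> 2 * sqrt \<delta> * real (2 * d)"
      by (rule mult_left_mono) (use deg_bound[OF Lpos, of d x] n_def dpos in simp_all)
    finally show ?thesis using True by simp
  next
    case False
    have "B4 x y = 0" for y
    proof (rule ccontr)
      assume "B4 x y \<noteq> 0"
      hence "x \<in> \<Omega>" "y \<in> S" "lat_dist d L x y = 1" unfolding B4_def by (simp_all split: if_splits)
      hence "x \<in> bd" unfolding bd_def lat_boundary_def S_def n_def by blast
      thus False using False by simp
    qed
    thus ?thesis using False by simp
  qed
  have bdsub: "bd \<subseteq> {..<n}" unfolding bd_def lat_boundary_def using memO by auto
  have "(\<Sum>x<n. \<Sum>y<n. B4 x y) \<le> (\<Sum>x<n. if x \<in> bd then 2 * sqrt \<delta> * real (2 * d) else 0)"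
    by (rule sum_mono) (rule B4row)
  also have "\<dots> = (\<Sum>x\<in>{x\<in>{..<n}. x \<in> bd}. 2 * sqrt \<delta> * real (2 * d))" by (rule sum.inter_filter[symmetric]) simp
  also have "{x\<in>{..<n}. x \<in> bd} = bd" using bdsub by auto
  finally have B4le: "(\<Sum>x<n. \<Sum>y<n. B4 x y) \<le> 4 * real d * sqrt \<delta> * real (card bd)" by (simp add: mult_ac)
  have "- (\<Sum>x<n. \<Sum>y<n. B4 x y) \<le> (\<Sum>x<n. \<Sum>y<n. A3 x y + A5 x y)"
    unfolding sum_negf[symmetric] by (rule sum_mono, rule sum_mono) (use A35 in simp)
  hence part3: "- 4 * real d * sqrt \<delta> * real (card bd) \<le> (\<Sum>x<n. \<Sum>y<n. A3 x y + A5 x y)"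
    using B4le by simp
  have "neg_trace A - 4 * real d * sqrt \<delta> * real (card bd) - \<mu> * (\<Sum>x\<in>\<Omega>. \<rho> x) \<le> Re (mat_trace (Kmu d L \<mu> * \<gamma>))"
    unfolding split A2eq B3eq using part1 part3 B2pos by simp
  thus ?thesis unfolding A_def S_def bd_def n_def by simp
qed


end
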